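(* Let $n>k\geq1$, $r=n-k$, and let $2\leq h\leq n-k$ and $k<d\leq n-h$ be integers. Let $\delta=\gcd(h,d-k)$, $s_0=\frac{d-k+\delta}{\delta}$, $s=\frac{d-k+h}{\delta}$ and $\ell=s\cdot s_0^n$. Let $F$ be a finite field with $|F|\geq s_0 n$ and let $\lambda_{i,j}$, $i\in[n]$, $j\in[0,s_0-1]$, be $s_0 n$ distinct elements of $F$. Let $\mathcal{C}_3$ be the set of all $(\bm c_1,\ldots,\bm c_n)$ with $\bm c_i=(c_{i,0},\ldots,c_{i,\ell-1})\in F^\ell$ satisfying $$\sum_{i=1}^n \lambda_{i,a_i}^{t-1} c_{i,(a,b)}=0\quad\text{for all } a\in[0,s_0^n-1],\ b\in[0,s-1],\ t\in[r].$$ Then $\mathcal{C}_3$ is an $(n,k,\ell)$ MDS array code satisfying the $(h,d)$-optimal repair property.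
   Context: Notation: $[n]=\{1,\ldots,n\}$, $[i,j]=\{i,\ldots,j\}$. Each $\tau\in[0,\ell-1]$ is written uniquely as $\tau=b\cdot s_0^n+\sum_{i=1}^n a_i s_0^{i-1}$ with $b\in[0,s-1]$, $a_i\in[0,s_0-1]$; we write $a=(a_1,\ldots,a_n)=\sum_i a_i s_0^{i-1}$ and $\tau=(a,b)$, so $c_{i,(a,b)}=c_{i,\tau}$. An $(n,k,\ell)$ MDS array code over $F$ is an $F$-linear set of vectors $(\bm c_1,\ldots,\bm c_n)$, $\bm c_i\in F^\ell$ (node $i$ stores $\bm c_i$), of dimension $k\ell$, such that any $k$ coordinates $\bm c_i$ determine the codeword. The $(h,d)$-optimal repair property means: for every $h$-subset $\mathcal{H}\subseteq[n]$ and every $d$-subset $\mathcal{R}\subseteq[n]\setminus\mathcal{H}$, each helper $j\in\mathcal{R}$ can send $\beta=\frac{h\ell}{d-k+h}$ symbols of $F$ computed from $\bm c_j$ such that from these $\frac{dh\ell}{d-k+h}$ symbols in total all $\bm c_i$, $i\in\mathcal{H}$, are determined, for every codeword (equality in the cut-set bound). *)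

theory Defs
  imports Complex_Main "HOL-Library.Function_Algebras"
begin

(* A codeword (c_1,...,c_n), c_i in F^ell, is represented as c :: nat => nat => 'a,
   where c i tau = c_{i,tau} for i in {1..n}, tau in {0..<ell}, and c is zero elsewhere. *)

definition cw_scale :: "'a::field \<Rightarrow> (nat \<Rightarrow> nat \<Rightarrow> 'a) \<Rightarrow> (nat \<Rightarrow> nat \<Rightarrow> 'a)" where
  "cw_scale x c = (\<lambda>i \<tau>. x * c i \<tau>)"

definition array_space :: "nat \<Rightarrow> nat \<Rightarrow> (nat \<Rightarrow> nat \<Rightarrow> 'a::zero) set" where
  "array_space n ell = {c. \<forall>i \<tau>. (i \<notin> {1..n} \<or> ell \<le> \<tau>) \<longrightarrow> c i \<tau> = 0}"

definition is_MDS_array_code :: "nat \<Rightarrow> nat \<Rightarrow> nat \<Rightarrow> (nat \<Rightarrow> nat \<Rightarrow> 'a::field) set \<Rightarrow> bool" where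
  "is_MDS_array_code n k ell C \<longleftrightarrow>
     C \<subseteq> array_space n ell \<and>
     module.subspace cw_scale C \<and>
     vector_space.dim cw_scale C = k * ell \<and>
     (\<forall>K. K \<subseteq> {1..n} \<and> card K = k \<longrightarrow>
        (\<forall>c\<in>C. \<forall>c'\<in>C. (\<forall>i\<in>K. c i = c' i) \<longrightarrow> c = c'))"

(* (h,d)-optimal repair: for every h-subset H of [n] and d-subset R of [n]-H, each helper
   j in R sends beta = h*ell/(d-k+h) symbols g j (c j) 0, ..., g j (c j) (beta-1),
   computed from c_j alone, and these determine all c_i, i in H. *)
definition has_optimal_repair :: "nat \<Rightarrow> nat \<Rightarrow> nat \<Rightarrow> nat \<Rightarrow> nat \<Rightarrow> (nat \<Rightarrow> nat \<Rightarrow> 'a) set \<Rightarrow> bool" where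
  "has_optimal_repair n k ell h d C \<longleftrightarrow>
     (\<forall>H R. H \<subseteq> {1..n} \<and> card H = h \<and> R \<subseteq> {1..n} - H \<and> card R = d \<longrightarrow>
        (\<exists>g :: nat \<Rightarrow> (nat \<Rightarrow> 'a) \<Rightarrow> nat \<Rightarrow> 'a.
           \<forall>c\<in>C. \<forall>c'\<in>C.
             (\<forall>j\<in>R. \<forall>m < h * ell div (d - k + h). g j (c j) m = g j (c' j) m)
             \<longrightarrow> (\<forall>i\<in>H. c i = c' i)))"

(* digit a_i of a = sum_i a_i s0^(i-1), i in [1..n] *)
definition digit :: "nat \<Rightarrow> nat \<Rightarrow> nat \<Rightarrow> nat" where
  "digit s0 a i = (a div s0 ^ (i - 1)) mod s0"

definition code_C3 :: "nat \<Rightarrow> nat \<Rightarrow> nat \<Rightarrow> nat \<Rightarrow> (nat \<Rightarrow> nat \<Rightarrow> 'a::field) \<Rightarrow> (nat \<Rightarrow> nat \<Rightarrow> 'a) set" where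
  "code_C3 n r s0 s lam = {c \<in> array_space n (s * s0 ^ n).
     \<forall>a < s0 ^ n. \<forall>b < s. \<forall>t \<in> {1..r}.
       (\<Sum>i = 1..n. lam i (digit s0 a i) ^ (t - 1) * c i (b * s0 ^ n + a)) = 0}"

end

theory Submission
  imports Defs "HOL-Computational_Algebra.Polynomial" "HOL-Library.FuncSet"
begin

definition undig :: "nat \<Rightarrow> (nat \<Rightarrow> nat) \<Rightarrow> nat \<Rightarrow> nat" where
  "undig s0 D n = (\<Sum>i=1..n. D i * s0 ^ (i - 1))"

lemma undig_Suc: "undig s0 D (Suc n) = undig s0 D n + D (Suc n) * s0 ^ n"
  unfolding undig_def by simp

lemma undig_cong: "(\<And>i. i \<in> {1..n} \<Longrightarrow> D i = D' i) \<Longrightarrow> undig s0 D n = undig s0 D' n"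
  unfolding undig_def by (rule sum.cong) auto

lemma undig_less:
  assumes "\<And>i. i \<in> {1..n} \<Longrightarrow> D i < s0"
  shows "undig s0 D n < s0 ^ n"
  using assms
proof (induction n)
  case 0 then show ?case by (simp add: undig_def)
next
  case (Suc n)
  have a: "undig s0 D n < s0 ^ n" using Suc by auto
  have b: "D (Suc n) + 1 \<le> s0" using Suc.prems[of "Suc n"] by auto
  have "undig s0 D n + D (Suc n) * s0 ^ n < s0 ^ n + D (Suc n) * s0 ^ n" using a by simp
  also have "\<dots> = (D (Suc n) + 1) * s0 ^ n" by simp
  also have "\<dots> \<le> s0 * s0 ^ n" using b by (intro mult_right_mono) auto
  finally show ?case by (simp add: undig_Suc)
qed

lemma digit_less: "0 < s0 \<Longrightarrow> digit s0 a i < s0"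
  unfolding digit_def by simp

lemma digit_undig:
  assumes "0 < s0" "\<And>i. i \<in> {1..n} \<Longrightarrow> D i < s0" "i \<in> {1..n}"
  shows "digit s0 (undig s0 D n) i = D i"
  using assms(2,3)
proof (induction n arbitrary: i)
  case 0 then show ?case by simp
next
  case (Suc n)
  define X where "X = undig s0 D n"
  have X: "X < s0 ^ n" unfolding X_def using Suc.prems by (intro undig_less) auto
  have U: "undig s0 D (Suc n) = X + D (Suc n) * s0 ^ n" by (simp add: undig_Suc X_def)
  show ?case
  proof (cases "i = Suc n")
    case True
    have "(X + D (Suc n) * s0 ^ n) div s0 ^ n = D (Suc n)"
      using X assms(1) by simp
    then show ?thesis using True U Suc.prems by (simp add: digit_def)
  next
    case False
    then have i: "i \<in> {1..n}" using Suc.prems by auto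
    have pw: "s0 ^ n = s0 ^ (i - 1) * (s0 ^ (n - i) * s0)"
    proof -
      have "n = (i - 1) + Suc (n - i)" using i by auto
      then have "s0 ^ n = s0 ^ (i - 1) * s0 ^ Suc (n - i)" by (metis power_add)
      then show ?thesis by (simp add: mult.commute)
    qed
    have "(X + D (Suc n) * s0 ^ n) div s0 ^ (i - 1) = X div s0 ^ (i - 1) + D (Suc n) * s0 ^ (n - i) * s0"
    proof -
      have "X + D (Suc n) * s0 ^ n = X + (D (Suc n) * s0 ^ (n - i) * s0) * s0 ^ (i - 1)"
        unfolding pw by (simp add: mult_ac)
      moreover have "s0 ^ (i - 1) \<noteq> 0" using assms(1) by simp
      moreover have "\<And>Y c. c \<noteq> 0 \<Longrightarrow> (X + Y * c) div c = X div c + (Y::nat)" by simp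
      ultimately show ?thesis by presburger
    qed
    then have "digit s0 (undig s0 D (Suc n)) i = digit s0 X i"
      unfolding digit_def U by simp
    also have "\<dots> = D i" unfolding X_def using Suc i by auto
    finally show ?thesis .
  qed
qed

lemma undig_digit: "undig s0 (digit s0 a) n = a mod s0 ^ n"
proof (induction n)
  case 0 then show ?case by (simp add: undig_def)
next
  case (Suc n)
  have "undig s0 (digit s0 a) (Suc n) = a mod s0 ^ n + (a div s0 ^ n) mod s0 * s0 ^ n"
    by (simp add: undig_Suc Suc digit_def)
  also have "\<dots> = a mod (s0 ^ n * s0)" by (simp add: mod_mult2_eq)
  finally show ?case by (simp add: mult.commute)
qed

lemma digit_inj:
  assumes "a < s0 ^ n" "a' < s0 ^ n" "\<And>i. i \<in> {1..n} \<Longrightarrow> digit s0 a i = digit s0 a' i"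
  shows "a = a'"
proof -
  have "a = undig s0 (digit s0 a) n" using assms by (simp add: undig_digit)
  also have "\<dots> = undig s0 (digit s0 a') n" using assms(3) by (rule undig_cong)
  also have "\<dots> = a'" using assms by (simp add: undig_digit)
  finally show ?thesis .
qed



lemma vandermonde_zero:
  fixes \<mu> :: "'b \<Rightarrow> 'a::field" and y :: "'b \<Rightarrow> 'a"
  assumes fin: "finite S" and inj: "inj_on \<mu> S" and cardS: "card S \<le> r"
    and eqs: "\<And>t. t \<in> {1..r} \<Longrightarrow> (\<Sum>p\<in>S. \<mu> p ^ (t - 1) * y p) = 0"
    and p0: "p0 \<in> S"
  shows "y p0 = 0"
proof -
  define P where "P = (\<Prod>p\<in>S - {p0}. [:- \<mu> p, 1:])"
  have "degree P \<le> (\<Sum>p\<in>S - {p0}. (degree \<circ> (\<lambda>p. [:- \<mu> p, 1:])) p)"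
    unfolding P_def using fin by (intro degree_prod_sum_le) auto
  also have "\<dots> = card (S - {p0})" by simp
  also have "\<dots> = card S - 1" using p0 fin by simp
  finally have degP: "degree P \<le> card S - 1" .
  have cS: "card S \<ge> 1" using p0 fin by (metis One_nat_def Suc_leI card_gt_0_iff empty_iff)
  have polyP: "poly P x = (\<Prod>p\<in>S - {p0}. x - \<mu> p)" for x
    unfolding P_def poly_prod by simp
  have z: "poly P (\<mu> p) = 0" if "p \<in> S" "p \<noteq> p0" for p
    unfolding polyP using that fin by (intro prod_zero) auto
  have nz: "poly P (\<mu> p0) \<noteq> 0"
    unfolding polyP using fin inj p0 by (auto simp: inj_on_def)
  have "0 = (\<Sum>j\<le>degree P. coeff P j * (\<Sum>p\<in>S. \<mu> p ^ j * y p))"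
  proof (intro sum.neutral[symmetric] ballI)
    fix j assume "j \<in> {..degree P}"
    then have "Suc j \<in> {1..r}" using degP cS cardS by auto
    from eqs[OF this] show "coeff P j * (\<Sum>p\<in>S. \<mu> p ^ j * y p) = 0" by simp
  qed
  also have "\<dots> = (\<Sum>p\<in>S. y p * (\<Sum>j\<le>degree P. coeff P j * \<mu> p ^ j))"
    by (simp add: sum_distrib_left sum_distrib_right mult_ac sum.swap[of _ "{..degree P}"])
  also have "\<dots> = (\<Sum>p\<in>S. y p * poly P (\<mu> p))" by (simp add: poly_altdef)
  also have "\<dots> = y p0 * poly P (\<mu> p0)"
    using fin p0 z by (subst sum.remove[of _ p0]) (auto intro!: sum.neutral)
  finally show ?thesis using nz by simp
qed

lemma vandermonde_solve:
  fixes \<mu> :: "nat \<Rightarrow> 'a::{field,finite}" and rhs :: "nat \<Rightarrow> 'a"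
  assumes fin: "finite P" and inj: "inj_on \<mu> P" and cardP: "card P = r"
  shows "\<exists>y. \<forall>t\<in>{1..r}. (\<Sum>i\<in>P. \<mu> i ^ (t - 1) * y i) = rhs t"
proof -
  define f where "f y = restrict (\<lambda>t. \<Sum>i\<in>P. \<mu> i ^ (t - 1) * y i) {1..r}" for y :: "nat \<Rightarrow> 'a"
  define A where "A = (P \<rightarrow>\<^sub>E (UNIV :: 'a set))"
  define B where "B = ({1..r} \<rightarrow>\<^sub>E (UNIV :: 'a set))"
  have injf: "inj_on f A"
  proof (rule inj_onI)
    fix y y' assume y: "y \<in> A" and y': "y' \<in> A" and e: "f y = f y'"
    have "y i = y' i" if i: "i \<in> P" for i
    proof -
      have "(y - y') i = 0"
      proof (rule vandermonde_zero[OF fin inj _ _ i, of r])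
        show "card P \<le> r" using cardP by simp
        fix t assume t: "t \<in> {1..r}"
        have "f y t = f y' t" using e by simp
        then have "(\<Sum>i\<in>P. \<mu> i ^ (t - 1) * y i) = (\<Sum>i\<in>P. \<mu> i ^ (t - 1) * y' i)"
          using t by (simp add: f_def)
        then show "(\<Sum>i\<in>P. \<mu> i ^ (t - 1) * (y - y') i) = 0"
          by (simp add: right_diff_distrib sum_subtractf)
      qed
      then show ?thesis by simp
    qed
    then show "y = y'" using y y' unfolding A_def by (intro PiE_ext) auto
  qed
  have sub: "f ` A \<subseteq> B" unfolding B_def f_def by auto
  have finB: "finite B" unfolding B_def by (intro finite_PiE) auto
  have "card (f ` A) = card A" using injf by (rule card_image)
  also have "\<dots> = card (UNIV :: 'a set) ^ r" unfolding A_def using fin cardP by (simp add: card_PiE)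
  also have "\<dots> = card B" unfolding B_def by (simp add: card_PiE)
  finally have "f ` A = B" using sub finB by (intro card_subset_eq) auto
  moreover have "restrict rhs {1..r} \<in> B" unfolding B_def by auto
  ultimately have "restrict rhs {1..r} \<in> f ` A" by simp
  then obtain y where "restrict rhs {1..r} = f y" by (rule imageE)
  then have "\<forall>t\<in>{1..r}. (\<Sum>i\<in>P. \<mu> i ^ (t - 1) * y i) = rhs t"
  proof (intro ballI)
    fix t assume t: "t \<in> {1..r}"
    assume "restrict rhs {1..r} = f y"
    then have "restrict rhs {1..r} t = f y t" by simp
    then show "(\<Sum>i\<in>P. \<mu> i ^ (t - 1) * y i) = rhs t" using t by (simp add: f_def)
  qed
  then show ?thesis by blast
qed



lemma sum_app2: "(sum f I) i \<tau> = (\<Sum>p\<in>I. f p i \<tau>)"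
  by (induct I rule: infinite_finite_induct) auto

lemma vs_cw: "vector_space (cw_scale :: 'a::field \<Rightarrow> (nat \<Rightarrow> nat \<Rightarrow> 'a) \<Rightarrow> _)"
  by unfold_locales (auto simp: cw_scale_def fun_eq_iff algebra_simps)

lemma sum_split_k:
  fixes k n :: nat
  assumes "k \<le> n"
  shows "(\<Sum>i=1..n. f i) = (\<Sum>i=1..k. f i) + (\<Sum>i\<in>{1..n} - {1..k}. f i)"
proof -
  have "{1..k} \<subseteq> {1..n}" using assms by auto
  from sum.subset_diff[OF this, of f] show ?thesis by (simp add: add.commute)
qed

locale c3code =
  fixes n k s0 s :: nat and lam :: "nat \<Rightarrow> nat \<Rightarrow> 'a::{field,finite}"
  assumes k1: "k \<ge> 1" and nk: "n > k" and s0pos: "s0 > 0"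
    and lam_inj: "inj_on (\<lambda>(i,j). lam i j) ({1..n} \<times> {0..<s0})"
begin

definition "N = s0 ^ n"
definition "ell = s * N"
definition "C = code_C3 n (n - k) s0 s lam"

lemma N_pos: "N > 0" using s0pos by (simp add: N_def)

lemma C_def2: "c \<in> C \<longleftrightarrow> c \<in> array_space n ell \<and> (\<forall>a < N. \<forall>b < s. \<forall>t \<in> {1..n - k}.
       (\<Sum>i = 1..n. lam i (digit s0 a i) ^ (t - 1) * c i (b * N + a)) = 0)"
  unfolding C_def code_C3_def ell_def N_def by simp

lemma arr: "c \<in> array_space n ell \<Longrightarrow> (i \<notin> {1..n} \<or> ell \<le> \<tau>) \<Longrightarrow> c i \<tau> = 0"
  unfolding array_space_def by auto

lemma inj_mu: "P \<subseteq> {1..n} \<Longrightarrow> inj_on (\<lambda>i. lam i (digit s0 a i)) P"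
proof (rule inj_onI)
  fix x y assume P: "P \<subseteq> {1..n}" and xy: "x \<in> P" "y \<in> P"
    and e: "lam x (digit s0 a x) = lam y (digit s0 a y)"
  have "(x, digit s0 a x) \<in> {1..n} \<times> {0..<s0}" "(y, digit s0 a y) \<in> {1..n} \<times> {0..<s0}"
    using P xy digit_less[OF s0pos] by auto
  from inj_onD[OF lam_inj _ this] e have "(x, digit s0 a x) = (y, digit s0 a y)" by simp
  then show "x = y" by simp
qed

lemma tau_decomp: "\<tau> < ell \<Longrightarrow> \<tau> div N < s \<and> \<tau> = (\<tau> div N) * N + \<tau> mod N \<and> \<tau> mod N < N"
  using N_pos by (auto simp: ell_def less_mult_imp_div_less div_mult_mod_eq)

lemma eq_tau:
  assumes "c \<in> C" "\<tau> < ell" "t \<in> {1..n - k}"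
  shows "(\<Sum>i = 1..n. lam i (digit s0 (\<tau> mod N) i) ^ (t - 1) * c i \<tau>) = 0"
proof -
  have "\<tau> div N < s" "\<tau> mod N < N" using tau_decomp[OF assms(2)] by auto
  then have "(\<Sum>i = 1..n. lam i (digit s0 (\<tau> mod N) i) ^ (t - 1) * c i ((\<tau> div N) * N + \<tau> mod N)) = 0"
    using assms(1,3) unfolding C_def2 by blast
  then show ?thesis using tau_decomp[OF assms(2)] by simp
qed

lemma unique:
  assumes K: "K \<subseteq> {1..n}" "card K = k" and c: "c \<in> C" "c' \<in> C"
    and agree: "\<forall>i\<in>K. c i = c' i"
  shows "c = c'"
proof (intro ext)
  fix i \<tau>
  show "c i \<tau> = c' i \<tau>"
  proof (cases "i \<in> {1..n} \<and> \<tau> < ell")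
    case False
    then have "i \<notin> {1..n} \<or> ell \<le> \<tau>" by auto
    moreover have "c \<in> array_space n ell" "c' \<in> array_space n ell" using c unfolding C_def2 by auto
    ultimately show ?thesis using arr[of c i \<tau>] arr[of c' i \<tau>] by simp
  next
    case True
    show ?thesis
    proof (cases "i \<in> K")
      case True then show ?thesis using agree by simp
    next
      case False
      define S where "S = {1..n} - K"
      define \<mu> where "\<mu> i = lam i (digit s0 (\<tau> mod N) i)" for i
      define y where "y i = c i \<tau> - c' i \<tau>" for i
      have "y i = 0"
      proof (rule vandermonde_zero[of S \<mu> "n - k"])
        show "finite S" unfolding S_def by simp
        show "inj_on \<mu> S" unfolding \<mu>_def S_def by (rule inj_mu) auto
        show "card S \<le> n - k" unfolding S_def using K by (simp add: card_Diff_subset finite_subset)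
        show "i \<in> S" unfolding S_def using \<open>i \<notin> K\<close> True by auto
        fix t assume t: "t \<in> {1..n - k}"
        have "(\<Sum>i\<in>S. \<mu> i ^ (t - 1) * y i) = (\<Sum>i=1..n. \<mu> i ^ (t - 1) * y i)"
          unfolding S_def using K agree y_def
          by (intro sum.mono_neutral_left) auto
        also have "\<dots> = (\<Sum>i=1..n. \<mu> i ^ (t - 1) * c i \<tau>) - (\<Sum>i=1..n. \<mu> i ^ (t - 1) * c' i \<tau>)"
          unfolding y_def by (simp add: right_diff_distrib sum_subtractf)
        also have "\<dots> = 0" using eq_tau[OF c(1) _ t] eq_tau[OF c(2) _ t] True unfolding \<mu>_def by simp
        finally show "(\<Sum>i\<in>S. \<mu> i ^ (t - 1) * y i) = 0" .
      qed
      then show ?thesis unfolding y_def by simp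
    qed
  qed
qed

lemma extension: "\<exists>c\<in>C. \<forall>i\<in>{1..k}. \<forall>\<tau><ell. c i \<tau> = v i \<tau>"
proof -
  define \<mu> where "\<mu> \<tau> i = lam i (digit s0 (\<tau> mod N) i)" for \<tau> i
  define P where "P = {1..n} - {1..k}"
  have cardP: "card P = n - k" unfolding P_def using nk by (simp add: card_Diff_subset)
  define rhs where "rhs \<tau> t = - (\<Sum>i=1..k. \<mu> \<tau> i ^ (t - 1) * v i \<tau>)" for \<tau> t
  define Y where "Y \<tau> = (SOME y. \<forall>t\<in>{1..n - k}. (\<Sum>i\<in>P. \<mu> \<tau> i ^ (t - 1) * y i) = rhs \<tau> t)" for \<tau>
  have Y: "(\<Sum>i\<in>P. \<mu> \<tau> i ^ (t - 1) * Y \<tau> i) = rhs \<tau> t" if "t \<in> {1..n - k}" for \<tau> t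
  proof -
    have "\<exists>y. \<forall>t\<in>{1..n - k}. (\<Sum>i\<in>P. \<mu> \<tau> i ^ (t - 1) * y i) = rhs \<tau> t"
    proof (rule vandermonde_solve[of P "\<mu> \<tau>" "n - k" "rhs \<tau>"])
      show "finite P" unfolding P_def by simp
      show "inj_on (\<mu> \<tau>) P" unfolding \<mu>_def P_def by (rule inj_mu) auto
      show "card P = n - k" by (rule cardP)
    qed
    then have "\<forall>t\<in>{1..n - k}. (\<Sum>i\<in>P. \<mu> \<tau> i ^ (t - 1) * Y \<tau> i) = rhs \<tau> t"
      unfolding Y_def by (rule someI_ex)
    then show ?thesis using that by blast
  qed
  define c where "c i \<tau> = (if i \<in> {1..n} \<and> \<tau> < ell then (if i \<le> k then v i \<tau> else Y \<tau> i) else 0)" for i \<tau>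
  have "c \<in> C"
    unfolding C_def2
  proof (intro conjI allI impI ballI)
    show "c \<in> array_space n ell" unfolding array_space_def c_def by auto
    fix a b t assume a: "a < N" and b: "b < s" and t: "t \<in> {1..n - k}"
    define \<tau> where "\<tau> = b * N + a"
    have "\<tau> < b * N + N" unfolding \<tau>_def using a by simp
    also have "\<dots> = Suc b * N" by simp
    also have "\<dots> \<le> s * N" using b by (intro mult_right_mono) auto
    finally have tl: "\<tau> < ell" unfolding ell_def .
    have tm: "\<tau> mod N = a" unfolding \<tau>_def using a by simp
    have "(\<Sum>i = 1..n. lam i (digit s0 a i) ^ (t - 1) * c i \<tau>) = (\<Sum>i = 1..n. \<mu> \<tau> i ^ (t - 1) * c i \<tau>)"
      unfolding \<mu>_def tm ..
    also have "\<dots> = (\<Sum>i=1..k. \<mu> \<tau> i ^ (t - 1) * c i \<tau>) + (\<Sum>i\<in>P. \<mu> \<tau> i ^ (t - 1) * c i \<tau>)"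
      unfolding P_def using nk by (intro sum_split_k) simp
    also have "(\<Sum>i=1..k. \<mu> \<tau> i ^ (t - 1) * c i \<tau>) = (\<Sum>i=1..k. \<mu> \<tau> i ^ (t - 1) * v i \<tau>)"
      using tl nk by (intro sum.cong) (auto simp: c_def)
    also have "(\<Sum>i\<in>P. \<mu> \<tau> i ^ (t - 1) * c i \<tau>) = (\<Sum>i\<in>P. \<mu> \<tau> i ^ (t - 1) * Y \<tau> i)"
      using tl by (intro sum.cong) (auto simp: c_def P_def)
    also have "\<dots> = rhs \<tau> t" using Y t by simp
    finally show "(\<Sum>i = 1..n. lam i (digit s0 a i) ^ (t - 1) * c i (b * N + a)) = 0"
      unfolding rhs_def \<tau>_def by simp
  qed
  moreover have "\<forall>i\<in>{1..k}. \<forall>\<tau><ell. c i \<tau> = v i \<tau>" using nk by (auto simp: c_def)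
  ultimately show ?thesis by blast
qed

end



context c3code
begin

lemma C_array: "c \<in> C \<Longrightarrow> c \<in> array_space n ell" by (simp add: C_def2)

lemma C_subspace: "module.subspace (cw_scale :: 'a \<Rightarrow> (nat \<Rightarrow> nat \<Rightarrow> 'a) \<Rightarrow> _) C"
proof -
  interpret V: vector_space "cw_scale :: 'a \<Rightarrow> (nat \<Rightarrow> nat \<Rightarrow> 'a) \<Rightarrow> _" by (rule vs_cw)
  show ?thesis
    unfolding V.subspace_def
  proof (intro conjI ballI allI)
    show "0 \<in> C" unfolding C_def2 array_space_def by simp
  next
    fix x y assume x: "x \<in> C" and y: "y \<in> C"
    show "x + y \<in> C" unfolding C_def2
    proof (intro conjI allI impI ballI)
      show "x + y \<in> array_space n ell" using C_array[OF x] C_array[OF y]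
        unfolding array_space_def by simp
      fix a b t assume "a < N" "b < s" "t \<in> {1..n - k}"
      then have "(\<Sum>i = 1..n. lam i (digit s0 a i) ^ (t - 1) * x i (b * N + a)) = 0"
        "(\<Sum>i = 1..n. lam i (digit s0 a i) ^ (t - 1) * y i (b * N + a)) = 0"
        using x y unfolding C_def2 by auto
      then show "(\<Sum>i = 1..n. lam i (digit s0 a i) ^ (t - 1) * (x + y) i (b * N + a)) = 0"
        by (simp add: distrib_left sum.distrib)
    qed
  next
    fix c and x assume x: "x \<in> C"
    show "cw_scale c x \<in> C" unfolding C_def2
    proof (intro conjI allI impI ballI)
      show "cw_scale c x \<in> array_space n ell" using C_array[OF x]
        unfolding array_space_def cw_scale_def by simp
      fix a b t assume "a < N" "b < s" "t \<in> {1..n - k}"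
      then have "(\<Sum>i = 1..n. lam i (digit s0 a i) ^ (t - 1) * x i (b * N + a)) = 0"
        using x unfolding C_def2 by auto
      then have "c * (\<Sum>i = 1..n. lam i (digit s0 a i) ^ (t - 1) * x i (b * N + a)) = 0" by simp
      then show "(\<Sum>i = 1..n. lam i (digit s0 a i) ^ (t - 1) * cw_scale c x i (b * N + a)) = 0"
        unfolding cw_scale_def by (simp add: sum_distrib_left mult_ac)
    qed
  qed
qed

lemma C_dim: "vector_space.dim (cw_scale :: 'a \<Rightarrow> (nat \<Rightarrow> nat \<Rightarrow> 'a) \<Rightarrow> _) C = k * ell"
proof -
  interpret V: vector_space "cw_scale :: 'a \<Rightarrow> (nat \<Rightarrow> nat \<Rightarrow> 'a) \<Rightarrow> _" by (rule vs_cw)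
  have subsp: "V.subspace C" by (rule C_subspace)
  define E where "E p = (SOME c. c \<in> C \<and> (\<forall>i\<in>{1..k}. \<forall>\<tau><ell. c i \<tau> = (if (i, \<tau>) = p then 1 else 0)))"
    for p :: "nat \<times> nat"
  have E: "E p \<in> C \<and> (\<forall>i\<in>{1..k}. \<forall>\<tau><ell. E p i \<tau> = (if (i, \<tau>) = p then 1 else 0))" for p
  proof -
    have "\<exists>c. c \<in> C \<and> (\<forall>i\<in>{1..k}. \<forall>\<tau><ell. c i \<tau> = (if (i, \<tau>) = p then 1 else 0))"
      using extension[of "\<lambda>i \<tau>. if (i, \<tau>) = p then 1 else 0"] by blast
    then show ?thesis unfolding E_def by (rule someI_ex)
  qed
  define I where "I = {1..k} \<times> {0..<ell}"
  have finI: "finite I" unfolding I_def by simp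
  have delta: "(\<Sum>p\<in>I. f p * E p i \<tau>) = f (i, \<tau>)" if it: "(i, \<tau>) \<in> I" for f i \<tau>
  proof -
    have "(\<Sum>p\<in>I. f p * E p i \<tau>) = (\<Sum>p\<in>I. if (i, \<tau>) = p then f p else 0)"
    proof (rule sum.cong)
      fix p assume "p \<in> I"
      have "E p i \<tau> = (if (i, \<tau>) = p then 1 else 0)" using E[of p] it unfolding I_def by auto
      then show "f p * E p i \<tau> = (if (i, \<tau>) = p then f p else 0)" by simp
    qed simp
    also have "\<dots> = f (i, \<tau>)" using finI it by (simp add: sum.delta)
    finally show ?thesis .
  qed
  have injE: "inj_on E I"
  proof (rule inj_onI)
    fix p p' assume p: "p \<in> I" and p': "p' \<in> I" and e: "E p = E p'"
    obtain i \<tau> where ip: "p = (i, \<tau>)" by force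
    have "i \<in> {1..k}" "\<tau> < ell" using p ip unfolding I_def by auto
    then have "E p i \<tau> = 1" "E p' i \<tau> = (if (i, \<tau>) = p' then 1 else 0)" using E[of p] E[of p'] ip by auto
    then show "p = p'" using e ip by (metis zero_neq_one)
  qed
  define Bs where "Bs = E ` I"
  have cardB: "card Bs = k * ell" unfolding Bs_def using injE by (simp add: card_image I_def card_cartesian_product)
  have BsC: "Bs \<subseteq> C" unfolding Bs_def using E by auto
  have span: "C \<subseteq> V.span Bs"
  proof
    fix c assume c: "c \<in> C"
    define z where "z = (\<Sum>p\<in>I. cw_scale (c (fst p) (snd p)) (E p))"
    have zC: "z \<in> C" unfolding z_def
      by (intro V.subspace_sum[OF subsp] V.subspace_scale[OF subsp]) (use E in auto)
    have zspan: "z \<in> V.span Bs" unfolding z_def Bs_def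
      by (intro V.span_sum V.span_scale V.span_base) auto
    have "c = z"
    proof (rule unique[of "{1..k}"])
      show "{1..k} \<subseteq> {1..n}" using nk by auto
      show "card {1..k} = k" by simp
      show "c \<in> C" "z \<in> C" by (fact c, fact zC)
      show "\<forall>i\<in>{1..k}. c i = z i"
      proof (intro ballI ext)
        fix i \<tau> assume i: "i \<in> {1..k}"
        show "c i \<tau> = z i \<tau>"
        proof (cases "\<tau> < ell")
          case True
          then have "(i, \<tau>) \<in> I" using i unfolding I_def by auto
          have "z i \<tau> = (\<Sum>p\<in>I. c (fst p) (snd p) * E p i \<tau>)"
            unfolding z_def sum_app2 cw_scale_def ..
          also have "\<dots> = c i \<tau>" using delta[OF \<open>(i, \<tau>) \<in> I\<close>, of "\<lambda>p. c (fst p) (snd p)"] by simp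
          finally show ?thesis by simp
        next
          case False
          then show ?thesis using arr[OF C_array[OF c]] arr[OF C_array[OF zC]] by simp
        qed
      qed
    qed
    then show "c \<in> V.span Bs" using zspan by simp
  qed
  have indep: "V.independent Bs"
  proof
    assume "V.dependent Bs"
    moreover have "finite Bs" unfolding Bs_def using finI by simp
    ultimately obtain u where u: "\<exists>v\<in>Bs. u v \<noteq> 0" "(\<Sum>v\<in>Bs. cw_scale (u v) v) = 0"
      using V.dependent_finite by blast
    from u(1) obtain p where p: "p \<in> I" "u (E p) \<noteq> 0" unfolding Bs_def by auto
    obtain i \<tau> where ip: "p = (i, \<tau>)" by force
    have "(\<Sum>q\<in>I. cw_scale (u (E q)) (E q)) = 0"
      using u(2) unfolding Bs_def by (simp add: sum.reindex[OF injE])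
    then have "(\<Sum>q\<in>I. cw_scale (u (E q)) (E q)) i \<tau> = 0" by simp
    then have "(\<Sum>q\<in>I. u (E q) * E q i \<tau>) = 0" unfolding sum_app2 cw_scale_def .
    then have "u (E (i, \<tau>)) = 0" using delta[of i \<tau> "\<lambda>q. u (E q)"] p ip by simp
    then show False using p ip by simp
  qed
  show ?thesis by (rule V.dim_unique[OF BsC span indep cardB])
qed

lemma C_MDS: "is_MDS_array_code n k ell C"
  unfolding is_MDS_array_code_def
  using C_array C_subspace C_dim unique by blast

end



lemma modshift_inv1:
  fixes d z s0 :: nat
  assumes "d < s0" "z < s0"
  shows "((d + z) mod s0 + (s0 - d)) mod s0 = z"
proof -
  have "((d + z) mod s0 + (s0 - d)) mod s0 = (d + z + (s0 - d)) mod s0" by (simp add: mod_add_left_eq)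
  also have "d + z + (s0 - d) = z + s0" using assms by simp
  finally show ?thesis using assms by simp
qed

lemma modshift_inv2:
  fixes d u s0 :: nat
  assumes "d < s0" "u < s0"
  shows "(d + (u + (s0 - d)) mod s0) mod s0 = u"
proof -
  have "(d + (u + (s0 - d)) mod s0) mod s0 = (d + (u + (s0 - d))) mod s0" by (simp add: mod_add_right_eq)
  also have "d + (u + (s0 - d)) = u + s0" using assms by simp
  finally show ?thesis using assms by simp
qed

lemma modshift_comp:
  fixes x z1 z2 s0 :: nat
  shows "((x + z1) mod s0 + z2) mod s0 = (x + (z1 + z2)) mod s0"
  by (simp add: mod_add_left_eq add.assoc)

locale c3rep = c3code n k s0 s lam
  for n k s0 s :: nat and lam :: "nat \<Rightarrow> nat \<Rightarrow> 'a::{field,finite}" +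
  fixes h d \<delta> m h' :: nat and H R :: "nat set" and idx :: "nat \<Rightarrow> nat"
  assumes \<delta>pos: "\<delta> > 0" and h_eq: "h = \<delta> * h'" and dk: "d - k = \<delta> * m" and kd: "k < d"
    and s0_eq: "s0 = m + 1" and s_eq: "s = m + h'" and dnh: "d + h \<le> n"
    and HS: "H \<subseteq> {1..n}" and cardH: "card H = h"
    and RS: "R \<subseteq> {1..n} - H" and cardR: "card R = d"
    and idx: "bij_betw idx H {0..<h}"
begin

definition "blk i = idx i div \<delta>"
definition "rho q = inv_into H idx (q * \<delta>)"
definition "B q = {i \<in> H. blk i = q}"
definition "sh q a z = undig s0 (\<lambda>i. if i \<in> B q then (digit s0 a i + z) mod s0 else digit s0 a i) n"

lemma rho: "q < h' \<Longrightarrow> rho q \<in> H \<and> idx (rho q) = q * \<delta>"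
proof -
  assume q: "q < h'"
  have "q * \<delta> < h" using q \<delta>pos h_eq by (simp add: mult.commute)
  then have "q * \<delta> \<in> idx ` H" using idx by (auto simp: bij_betw_def)
  then show ?thesis unfolding rho_def by (simp add: inv_into_into f_inv_into_f)
qed

lemma rho_B: "q < h' \<Longrightarrow> rho q \<in> B q"
  using rho \<delta>pos unfolding B_def blk_def by simp

lemma B_sub: "B q \<subseteq> H" unfolding B_def by auto

lemma blk_less: "i \<in> H \<Longrightarrow> blk i < h'"
proof -
  assume i: "i \<in> H"
  then have "idx i < \<delta> * h'" using idx h_eq by (auto simp: bij_betw_def)
  then show ?thesis unfolding blk_def using \<delta>pos by (simp add: div_less_iff_less_mult mult.commute)
qed

lemma card_B: "card (B q) \<le> \<delta>"
proof -
  have "inj_on idx (B q)" using idx B_sub by (auto simp: bij_betw_def intro: inj_on_subset)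
  moreover have "idx ` B q \<subseteq> {q * \<delta>..<q * \<delta> + \<delta>}"
  proof
    fix x assume "x \<in> idx ` B q"
    then obtain i where "i \<in> B q" "x = idx i" by auto
    then have "x div \<delta> = q" unfolding B_def blk_def by simp
    moreover have "x div \<delta> * \<delta> + x mod \<delta> = x" by (rule div_mult_mod_eq)
    moreover have "x mod \<delta> < \<delta>" using \<delta>pos by simp
    ultimately show "x \<in> {q * \<delta>..<q * \<delta> + \<delta>}" by auto
  qed
  ultimately have "card (B q) \<le> card {q * \<delta>..<q * \<delta> + \<delta>}" by (intro card_inj_on_le) auto
  then show ?thesis by simp
qed

lemma finB: "finite (B q)"
proof -
  have "B q \<subseteq> {1..n}" using B_sub HS by blast
  then show ?thesis by (rule finite_subset) simp
qed

lemma B_n: "i \<in> B q \<Longrightarrow> i \<in> {1..n}" using B_sub[of q] HS by blast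

lemma sh_less: "sh q a z < N"
  unfolding sh_def N_def using s0pos by (intro undig_less) (auto simp: digit_less)

lemma digit_sh: "i \<in> {1..n} \<Longrightarrow>
  digit s0 (sh q a z) i = (if i \<in> B q then (digit s0 a i + z) mod s0 else digit s0 a i)"
  unfolding sh_def using s0pos by (subst digit_undig) (auto simp: digit_less)

lemma digits_eq: "a < N \<Longrightarrow> a' < N \<Longrightarrow> (\<And>i. i \<in> {1..n} \<Longrightarrow> digit s0 a i = digit s0 a' i) \<Longrightarrow> a = a'"
  unfolding N_def by (rule digit_inj)

lemma sh_0: "a < N \<Longrightarrow> sh q a 0 = a"
  by (rule digits_eq[OF sh_less]) (auto simp: digit_sh digit_less[OF s0pos])

lemma sh_sh: assumes a: "a < N" and z: "(z1 + z2) mod s0 = 0" shows "sh q (sh q a z1) z2 = a"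
proof (rule digits_eq[OF sh_less a])
  fix i assume i: "i \<in> {1..n}"
  show "digit s0 (sh q (sh q a z1) z2) i = digit s0 a i"
  proof (cases "i \<in> B q")
    case True
    have "digit s0 (sh q (sh q a z1) z2) i = ((digit s0 a i + z1) mod s0 + z2) mod s0"
      using i True by (simp add: digit_sh)
    also have "\<dots> = (digit s0 a i + (z1 + z2)) mod s0" by (rule modshift_comp)
    also have "\<dots> = (digit s0 a i + (z1 + z2) mod s0) mod s0" by (simp add: mod_add_right_eq)
    also have "\<dots> = digit s0 a i" using z digit_less[OF s0pos] by simp
    finally show ?thesis .
  next
    case False then show ?thesis using i by (simp add: digit_sh)
  qed
qed

lemma line:
  assumes p: "p < N" and q: "q < h'" and u: "u < s0"
  shows "\<exists>a<N. \<exists>z<s0. digit s0 a (rho q) = u \<and> sh q a z = p \<and> (z = 0 \<longrightarrow> a = p)"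
proof -
  define dp where "dp = digit s0 p (rho q)"
  have dp: "dp < s0" unfolding dp_def using digit_less[OF s0pos] .
  define z1 where "z1 = (u + (s0 - dp)) mod s0"
  define z2 where "z2 = (dp + (s0 - u)) mod s0"
  define a where "a = sh q p z1"
  have rq: "rho q \<in> B q" "rho q \<in> {1..n}" using rho_B[OF q] B_n by auto
  have "digit s0 a (rho q) = (dp + z1) mod s0" unfolding a_def dp_def using rq by (simp add: digit_sh)
  also have "\<dots> = u" unfolding z1_def using modshift_inv2[OF dp u] .
  finally have da: "digit s0 a (rho q) = u" .
  have "(z1 + z2) mod s0 = ((u + (s0 - dp)) + (dp + (s0 - u))) mod s0"
    unfolding z1_def z2_def by (simp add: mod_add_eq)
  also have "(u + (s0 - dp)) + (dp + (s0 - u)) = s0 + s0" using u dp by simp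
  finally have zz: "(z1 + z2) mod s0 = 0" by simp
  have sp: "sh q a z2 = p" unfolding a_def using sh_sh[OF p zz] .
  have "z2 = 0 \<longrightarrow> a = p"
  proof
    assume "z2 = 0"
    then have "z1 mod s0 = 0" using zz by simp
    then have "z1 = 0" unfolding z1_def by simp
    then show "a = p" unfolding a_def using sh_0[OF p] by simp
  qed
  moreover have "a < N" unfolding a_def by (rule sh_less)
  moreover have "z2 < s0" unfolding z2_def using s0pos by simp
  ultimately show ?thesis using da sp by blast
qed

end



context c3rep
begin

definition msg :: "nat \<Rightarrow> nat \<Rightarrow> (nat \<Rightarrow> 'a) \<Rightarrow> 'a" where
  "msg q a cj = (if digit s0 a (rho q) = 0 then (\<Sum>z=0..<s0. cj ((m + q) * N + sh q a z))
     else (\<Sum>z=0..<s0. cj ((digit s0 a (rho q) - 1) * N + sh q a z)) + cj ((m + q) * N + a))"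

definition W :: "(nat \<Rightarrow> nat \<Rightarrow> 'a) \<Rightarrow> nat \<Rightarrow> nat \<Rightarrow> nat \<Rightarrow> nat \<Rightarrow> 'a" where
  "W x q a i z = (if digit s0 a (rho q) = 0 then x i ((m + q) * N + sh q a z)
     else x i ((digit s0 a (rho q) - 1) * N + sh q a z) + (if z = 0 then x i ((m + q) * N + a) else 0))"

lemma msg_W: "msg q a (x i) = (\<Sum>z=0..<s0. W x q a i z)"
  using s0pos by (simp add: msg_def W_def sum.distrib)

lemma msg_diff: "msg q a (\<lambda>\<tau>. f \<tau> - g \<tau>) = msg q a f - msg q a g"
  unfolding msg_def by (simp add: sum_subtractf)

lemma layer_lt: "b < s \<Longrightarrow> p < N \<Longrightarrow> b * N + p < ell"
proof -
  assume b: "b < s" and p: "p < N"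
  have "b * N + p < b * N + N" using p by simp
  also have "\<dots> = Suc b * N" by simp
  also have "\<dots> \<le> s * N" using b by (intro mult_right_mono) auto
  finally show ?thesis unfolding ell_def .
qed

lemma eqC: "x \<in> C \<Longrightarrow> p < N \<Longrightarrow> b < s \<Longrightarrow> t \<in> {1..n - k} \<Longrightarrow>
  (\<Sum>i = 1..n. lam i (digit s0 p i) ^ (t - 1) * x i (b * N + p)) = 0"
  unfolding C_def2 by blast

lemma row_sum_zero:
  assumes x: "x \<in> C" and q: "q < h'" and a: "a < N" and t: "t \<in> {1..n - k}" and z: "z < s0"
  shows "(\<Sum>i = 1..n. lam i (digit s0 (sh q a z) i) ^ (t - 1) * W x q a i z) = 0"
proof (cases "digit s0 a (rho q) = 0")
  case True
  have "m + q < s" using q s_eq by simp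
  then show ?thesis using eqC[OF x sh_less _ t] True unfolding W_def by simp
next
  case False
  define r where "r = digit s0 a (rho q)"
  have r: "r - 1 < s" using digit_less[OF s0pos, of a "rho q"] s0_eq s_eq q unfolding r_def by simp
  have mq: "m + q < s" using q s_eq by simp
  have "(\<Sum>i = 1..n. lam i (digit s0 (sh q a z) i) ^ (t - 1) * W x q a i z)
     = (\<Sum>i = 1..n. lam i (digit s0 (sh q a z) i) ^ (t - 1) * x i ((r - 1) * N + sh q a z))
       + (if z = 0 then (\<Sum>i = 1..n. lam i (digit s0 (sh q a z) i) ^ (t - 1) * x i ((m + q) * N + a)) else 0)"
    using False unfolding W_def r_def by (simp add: distrib_left sum.distrib)
  also have "\<dots> = 0"
  proof -
    have "(\<Sum>i = 1..n. lam i (digit s0 (sh q a z) i) ^ (t - 1) * x i ((r - 1) * N + sh q a z)) = 0"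
      by (rule eqC[OF x sh_less r t])
    moreover have "z = 0 \<Longrightarrow> (\<Sum>i = 1..n. lam i (digit s0 (sh q a z) i) ^ (t - 1) * x i ((m + q) * N + a)) = 0"
      using eqC[OF x a mq t] sh_0[OF a] by simp
    ultimately show ?thesis by simp
  qed
  finally show ?thesis .
qed

lemma row:
  assumes x: "x \<in> C" and q: "q < h'" and a: "a < N" and R0: "\<forall>j\<in>R. msg q a (x j) = 0"
  shows "(\<forall>i\<in>B q. \<forall>z<s0. W x q a i z = 0) \<and> (\<forall>i\<in>{1..n} - B q - R. msg q a (x i) = 0)"
proof -
  define zinv where "zinv i u = (u + (s0 - digit s0 a i)) mod s0" for i u
  define Rest where "Rest = {1..n} - B q - R"
  define SB where "SB = B q \<times> {0..<s0}"
  define SR where "SR = (\<lambda>i. (i, digit s0 a i)) ` Rest"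
  define S where "S = SB \<union> SR"
  define \<mu> where "\<mu> = (\<lambda>(i, j). lam i j)"
  define y where "y p = (if fst p \<in> B q then W x q a (fst p) (zinv (fst p) (snd p)) else msg q a (x (fst p)))" for p
  have finS: "finite S" unfolding S_def SB_def SR_def Rest_def using finB by simp
  have dl: "digit s0 a i < s0" for i using digit_less[OF s0pos] .
  have Sn: "S \<subseteq> {1..n} \<times> {0..<s0}" unfolding S_def SB_def SR_def Rest_def using B_n dl by auto
  have injS: "inj_on \<mu> S" unfolding \<mu>_def by (rule inj_on_subset[OF lam_inj Sn])
  have disj: "SB \<inter> SR = {}" unfolding SB_def SR_def Rest_def by auto
  have BR: "B q \<inter> R = {}" using B_sub RS by auto
  have cardRest: "card Rest = n - card (B q) - d"
  proof -
    have "card Rest = card ({1..n} - B q) - card R"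
      unfolding Rest_def using RS BR by (subst card_Diff_subset) (auto simp: finite_subset)
    also have "card ({1..n} - B q) = n - card (B q)" using B_n finB by (subst card_Diff_subset) auto
    finally show ?thesis using cardR by simp
  qed
  have cardSR: "card SR \<le> card Rest" unfolding SR_def by (rule card_image_le) (simp add: Rest_def)
  have cardSB: "card SB = card (B q) * s0" unfolding SB_def by (simp add: card_cartesian_product)
  have cB: "card (B q) \<le> \<delta>" by (rule card_B)
  have cBh: "card (B q) \<le> h" using card_mono[OF _ B_sub] cardH HS by (metis finite_atLeastAtMost finite_subset)
  have cardS: "card S \<le> n - k"
  proof -
    have "card S \<le> card SB + card SR" unfolding S_def by (rule card_Un_le)
    also have "\<dots> \<le> card (B q) * s0 + (n - card (B q) - d)" using cardSB cardSR cardRest by simp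
    also have "\<dots> = card (B q) * m + (n - d)" using s0_eq cBh dnh by simp
    also have "\<dots> \<le> \<delta> * m + (n - d)" using cB by (simp add: mult_right_mono)
    also have "\<dots> = n - k" using dk kd dnh by simp
    finally show ?thesis .
  qed
  have eqs: "(\<Sum>p\<in>S. \<mu> p ^ (t - 1) * y p) = 0" if t: "t \<in> {1..n - k}" for t
  proof -
    have Bpart: "(\<Sum>p\<in>SB. \<mu> p ^ (t - 1) * y p)
        = (\<Sum>i\<in>B q. \<Sum>z=0..<s0. lam i (digit s0 (sh q a z) i) ^ (t - 1) * W x q a i z)"
    proof -
      have "(\<Sum>p\<in>SB. \<mu> p ^ (t - 1) * y p) = (\<Sum>i\<in>B q. \<Sum>u=0..<s0. lam i u ^ (t - 1) * W x q a i (zinv i u))"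
        unfolding SB_def sum.cartesian_product \<mu>_def y_def by (intro sum.cong) auto
      also have "\<dots> = (\<Sum>i\<in>B q. \<Sum>z=0..<s0. lam i (digit s0 (sh q a z) i) ^ (t - 1) * W x q a i z)"
      proof (rule sum.cong[OF refl])
        fix i assume i: "i \<in> B q"
        show "(\<Sum>u=0..<s0. lam i u ^ (t - 1) * W x q a i (zinv i u))
            = (\<Sum>z=0..<s0. lam i (digit s0 (sh q a z) i) ^ (t - 1) * W x q a i z)"
        proof (rule sum.reindex_bij_witness[where i = "\<lambda>z. (digit s0 a i + z) mod s0" and j = "zinv i"])
          fix u assume "u \<in> {0..<s0}"
          then show "(digit s0 a i + zinv i u) mod s0 = u" "zinv i u \<in> {0..<s0}"
            unfolding zinv_def using modshift_inv2[OF dl] s0pos by auto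
        next
          fix z assume z: "z \<in> {0..<s0}"
          then show "zinv i ((digit s0 a i + z) mod s0) = z" "(digit s0 a i + z) mod s0 \<in> {0..<s0}"
            unfolding zinv_def using modshift_inv1[OF dl] s0pos by auto
        next
          fix u assume u: "u \<in> {0..<s0}"
          have "digit s0 (sh q a (zinv i u)) i = (digit s0 a i + zinv i u) mod s0"
            using i B_n[OF i] by (simp add: digit_sh)
          also have "\<dots> = u" unfolding zinv_def using modshift_inv2[OF dl] u by auto
          finally show "lam i (digit s0 (sh q a (zinv i u)) i) ^ (t - 1) * W x q a i (zinv i u)
              = lam i u ^ (t - 1) * W x q a i (zinv i u)" by simp
        qed
      qed
      finally show ?thesis .
    qed
    have Rpart: "(\<Sum>p\<in>SR. \<mu> p ^ (t - 1) * y p)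
        = (\<Sum>i\<in>{1..n} - B q. \<Sum>z=0..<s0. lam i (digit s0 (sh q a z) i) ^ (t - 1) * W x q a i z)"
    proof -
      have "(\<Sum>p\<in>SR. \<mu> p ^ (t - 1) * y p) = (\<Sum>i\<in>Rest. lam i (digit s0 a i) ^ (t - 1) * msg q a (x i))"
        unfolding SR_def by (subst sum.reindex) (auto simp: inj_on_def \<mu>_def y_def Rest_def)
      also have "\<dots> = (\<Sum>i\<in>{1..n} - B q. lam i (digit s0 a i) ^ (t - 1) * msg q a (x i))"
        unfolding Rest_def using R0 by (intro sum.mono_neutral_left) auto
      also have "\<dots> = (\<Sum>i\<in>{1..n} - B q. \<Sum>z=0..<s0. lam i (digit s0 (sh q a z) i) ^ (t - 1) * W x q a i z)"
      proof (rule sum.cong[OF refl])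
        fix i assume i: "i \<in> {1..n} - B q"
        then have "\<And>z. digit s0 (sh q a z) i = digit s0 a i" by (simp add: digit_sh)
        then show "lam i (digit s0 a i) ^ (t - 1) * msg q a (x i)
          = (\<Sum>z=0..<s0. lam i (digit s0 (sh q a z) i) ^ (t - 1) * W x q a i z)"
          by (simp add: msg_W sum_distrib_left)
      qed
      finally show ?thesis .
    qed
    have "(\<Sum>p\<in>S. \<mu> p ^ (t - 1) * y p) = (\<Sum>p\<in>SB. \<mu> p ^ (t - 1) * y p) + (\<Sum>p\<in>SR. \<mu> p ^ (t - 1) * y p)"
      unfolding S_def using finS disj by (subst sum.union_disjoint) (auto simp: S_def)
    also have "\<dots> = (\<Sum>i\<in>{1..n}. \<Sum>z=0..<s0. lam i (digit s0 (sh q a z) i) ^ (t - 1) * W x q a i z)"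
      unfolding Bpart Rpart using B_n finB
      by (subst sum.subset_diff[of "B q" "{1..n}"]) (auto simp: add.commute)
    also have "\<dots> = (\<Sum>z=0..<s0. \<Sum>i=1..n. lam i (digit s0 (sh q a z) i) ^ (t - 1) * W x q a i z)"
      by (rule sum.swap)
    also have "\<dots> = 0" using row_sum_zero[OF x q a t] by simp
    finally show ?thesis .
  qed
  have yz: "y p = 0" if "p \<in> S" for p
    by (rule vandermonde_zero[OF finS injS cardS eqs that])
  show ?thesis
  proof (intro conjI ballI allI impI)
    fix i z assume i: "i \<in> B q" and z: "z < s0"
    have "(i, (digit s0 a i + z) mod s0) \<in> S" unfolding S_def SB_def using i s0pos by auto
    from yz[OF this] show "W x q a i z = 0"
      using i z modshift_inv1[OF dl z] unfolding y_def zinv_def by simp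
  next
    fix i assume i: "i \<in> {1..n} - B q - R"
    have "(i, digit s0 a i) \<in> S" unfolding S_def SR_def Rest_def using i by auto
    from yz[OF this] show "msg q a (x i) = 0" using i unfolding y_def by simp
  qed
qed

end



context c3rep
begin

lemma repair_zero:
  assumes x: "x \<in> C" and R0: "\<forall>j\<in>R. \<forall>q<h'. \<forall>a<N. msg q a (x j) = 0"
  shows "\<forall>i\<in>H. x i = (\<lambda>_. 0)"
proof -
  have Wz: "W x q a i z = 0" if "q < h'" "a < N" "i \<in> B q" "z < s0" for q a i z
    using row[OF x that(1,2)] R0 that by blast
  have Mz: "msg q a (x i) = 0" if "q < h'" "a < N" "i \<in> {1..n} - B q - R" for q a i
    using row[OF x that(1,2)] R0 that by blast
  have inB: "i \<in> B (blk i)" if "i \<in> H" for i using that unfolding B_def by simp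
  have c1: "x i ((m + blk i) * N + p) = 0" if i: "i \<in> H" and p: "p < N" for i p
  proof -
    obtain a z where a: "a < N" "z < s0" "digit s0 a (rho (blk i)) = 0" "sh (blk i) a z = p"
      using line[OF p blk_less[OF i], of 0] s0pos by blast
    from Wz[OF blk_less[OF i] a(1) inB[OF i] a(2)] show ?thesis using a unfolding W_def by simp
  qed
  have c2: "x i (b * N + p) = 0" if i: "i \<in> H" and p: "p < N" and b: "b < m" for i p b
  proof -
    obtain a z where a: "a < N" "z < s0" "digit s0 a (rho (blk i)) = Suc b" "sh (blk i) a z = p"
      "z = 0 \<longrightarrow> a = p"
      using line[OF p blk_less[OF i], of "Suc b"] s0_eq b by auto
    from Wz[OF blk_less[OF i] a(1) inB[OF i] a(2)]
    have "x i (b * N + p) + (if z = 0 then x i ((m + blk i) * N + a) else 0) = 0"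
      using a unfolding W_def by simp
    moreover have "z = 0 \<Longrightarrow> x i ((m + blk i) * N + a) = 0" using c1[OF i p] a(5) by simp
    ultimately show ?thesis by (cases "z = 0") auto
  qed
  have c3a: "x i ((m + q) * N + a) = 0"
    if i: "i \<in> H" and q: "q < h'" "q \<noteq> blk i" and a: "a < N" and r: "digit s0 a (rho q) \<noteq> 0" for i q a
  proof -
    have iR: "i \<in> {1..n} - B q - R" using i q HS RS unfolding B_def by auto
    have rl: "digit s0 a (rho q) - 1 < m" using r digit_less[OF s0pos, of a "rho q"] s0_eq by simp
    have "(\<Sum>z=0..<s0. x i ((digit s0 a (rho q) - 1) * N + sh q a z)) = 0"
      using c2[OF i sh_less rl] by simp
    then show ?thesis using Mz[OF q(1) a iR] r unfolding msg_def by simp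
  qed
  have c3: "x i ((m + q) * N + a) = 0"
    if i: "i \<in> H" and q: "q < h'" "q \<noteq> blk i" and a: "a < N" for i q a
  proof (cases "digit s0 a (rho q) = 0")
    case False then show ?thesis using c3a[OF i q a] by simp
  next
    case True
    have iR: "i \<in> {1..n} - B q - R" using i q HS RS unfolding B_def by auto
    have rq: "rho q \<in> B q" "rho q \<in> {1..n}" using rho_B[OF q(1)] B_n by auto
    have "(\<Sum>z=0..<s0. x i ((m + q) * N + sh q a z)) = 0"
      using Mz[OF q(1) a iR] True unfolding msg_def by simp
    moreover have "(\<Sum>z=0..<s0. x i ((m + q) * N + sh q a z))
        = (\<Sum>z=0..<s0. if z = 0 then x i ((m + q) * N + a) else 0)"
    proof (rule sum.cong[OF refl])
      fix z assume z: "z \<in> {0..<s0}"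
      show "x i ((m + q) * N + sh q a z) = (if z = 0 then x i ((m + q) * N + a) else 0)"
      proof (cases "z = 0")
        case True then show ?thesis using sh_0[OF a] by simp
      next
        case False
        have "digit s0 (sh q a z) (rho q) = z" using rq True z by (simp add: digit_sh)
        then show ?thesis using c3a[OF i q sh_less] False by simp
      qed
    qed
    ultimately show ?thesis using s0pos by simp
  qed
  show ?thesis
  proof (intro ballI ext)
    fix i \<tau> assume i: "i \<in> H"
    show "x i \<tau> = 0"
    proof (cases "\<tau> < ell")
      case False then show ?thesis using arr[OF C_array[OF x]] by simp
    next
      case True
      define b where "b = \<tau> div N"
      define p where "p = \<tau> mod N"
      have bp: "b < s" "\<tau> = b * N + p" "p < N" using tau_decomp[OF True] unfolding b_def p_def by auto
      show ?thesis
      proof (cases "b < m")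
        case True then show ?thesis using c2[OF i bp(3)] bp by simp
      next
        case False
        define q where "q = b - m"
        have q: "q < h'" "b = m + q" using False bp(1) s_eq unfolding q_def by auto
        show ?thesis
        proof (cases "q = blk i")
          case True then show ?thesis using c1[OF i bp(3)] bp q by simp
        next
          case False then show ?thesis using c3[OF i q(1) False bp(3)] bp q by simp
        qed
      qed
    qed
  qed
qed

lemma beta_eq: "h > 0 \<Longrightarrow> h * ell div (d - k + h) = h' * N"
proof -
  assume hp: "h > 0"
  have e1: "d - k + h = \<delta> * (m + h')" using dk h_eq by (simp add: distrib_left)
  have e2: "h * ell = (\<delta> * (m + h')) * (h' * N)" using h_eq s_eq unfolding ell_def by (simp add: mult_ac)
  have "\<delta> * (m + h') > 0" using \<delta>pos hp h_eq by simp
  then show ?thesis unfolding e1 e2 by simp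
qed

lemma repair:
  assumes hp: "h > 0"
  shows "\<exists>g :: nat \<Rightarrow> (nat \<Rightarrow> 'a) \<Rightarrow> nat \<Rightarrow> 'a. \<forall>c\<in>C. \<forall>c'\<in>C.
           (\<forall>j\<in>R. \<forall>mm < h * ell div (d - k + h). g j (c j) mm = g j (c' j) mm)
           \<longrightarrow> (\<forall>i\<in>H. c i = c' i)"
proof (intro exI[of _ "\<lambda>j cj mm. msg (mm div N) (mm mod N) cj"] ballI impI)
  fix c c' i assume c: "c \<in> C" and c': "c' \<in> C" and i: "i \<in> H"
  assume eq: "\<forall>j\<in>R. \<forall>mm < h * ell div (d - k + h).
      msg (mm div N) (mm mod N) (c j) = msg (mm div N) (mm mod N) (c' j)"
  interpret V: vector_space "cw_scale :: 'a \<Rightarrow> (nat \<Rightarrow> nat \<Rightarrow> 'a) \<Rightarrow> _" by (rule vs_cw)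
  define x where "x = c - c'"
  have x: "x \<in> C" unfolding x_def by (rule V.subspace_diff[OF C_subspace c c'])
  have xi: "x j = (\<lambda>\<tau>. c j \<tau> - c' j \<tau>)" for j unfolding x_def by auto
  have "\<forall>j\<in>R. \<forall>q<h'. \<forall>a<N. msg q a (x j) = 0"
  proof (intro ballI allI impI)
    fix j q a assume j: "j \<in> R" and q: "q < h'" and a: "a < N"
    have "q * N + a < h' * N"
    proof -
      have "q * N + a < q * N + N" using a by simp
      also have "\<dots> = Suc q * N" by simp
      also have "\<dots> \<le> h' * N" using q by (intro mult_right_mono) auto
      finally show ?thesis .
    qed
    moreover have "(q * N + a) div N = q" "(q * N + a) mod N = a" using a N_pos by simp_all
    ultimately show "msg q a (x j) = 0" using eq j beta_eq[OF hp] unfolding xi msg_diff by fastforce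
  qed
  from repair_zero[OF x this] i have "x i = (\<lambda>_. 0)" by blast
  then show "c i = c' i" unfolding x_def by (auto simp: fun_eq_iff)
qed

end



theorem theorem3:
  fixes n k h d :: nat and lam :: "nat \<Rightarrow> nat \<Rightarrow> 'a::{field,finite}"
  assumes "k \<ge> 1" and "n > k"
    and "2 \<le> h" and "h \<le> n - k"
    and "k < d" and "d \<le> n - h"
    and "card (UNIV :: 'a set) \<ge> ((d - k + gcd h (d - k)) div gcd h (d - k)) * n"
    and "inj_on (\<lambda>(i, j). lam i j) ({1..n} \<times> {0..<(d - k + gcd h (d - k)) div gcd h (d - k)})"
  shows "let \<delta> = gcd h (d - k); s0 = (d - k + \<delta>) div \<delta>; s = (d - k + h) div \<delta>;
             ell = s * s0 ^ n; C = code_C3 n (n - k) s0 s lam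
         in is_MDS_array_code n k ell C \<and> has_optimal_repair n k ell h d C"
proof -
  define \<delta> where "\<delta> = gcd h (d - k)"
  define m where "m = (d - k) div \<delta>"
  define h' where "h' = h div \<delta>"
  define s0 where "s0 = (d - k + \<delta>) div \<delta>"
  define s where "s = (d - k + h) div \<delta>"
  have \<delta>pos: "\<delta> > 0" unfolding \<delta>_def using assms(3) by simp
  have dk: "d - k = \<delta> * m" unfolding m_def \<delta>_def by simp
  have hh: "h = \<delta> * h'" unfolding h'_def \<delta>_def by simp
  have s0e: "s0 = m + 1"
  proof -
    have "d - k + \<delta> = \<delta> * (m + 1)" using dk by simp
    then show ?thesis unfolding s0_def using \<delta>pos by simp
  qed
  have se: "s = m + h'"
  proof -
    have "d - k + h = \<delta> * (m + h')" using dk hh by (simp add: distrib_left)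
    then show ?thesis unfolding s_def using \<delta>pos by simp
  qed
  have inj: "inj_on (\<lambda>(i, j). lam i j) ({1..n} \<times> {0..<s0})"
    using assms(8) unfolding s0_def \<delta>_def .
  interpret c3code n k s0 s lam
    by unfold_locales (use assms(1,2) inj s0e in auto)
  have ellC: "s * s0 ^ n = ell" "code_C3 n (n - k) s0 s lam = C"
    unfolding ell_def N_def C_def by simp_all
  have MDS: "is_MDS_array_code n k (s * s0 ^ n) (code_C3 n (n - k) s0 s lam)"
    unfolding ellC by (rule C_MDS)
  have REP: "has_optimal_repair n k (s * s0 ^ n) h d (code_C3 n (n - k) s0 s lam)"
    unfolding has_optimal_repair_def ellC
  proof (intro allI impI)
    fix H R assume HR: "H \<subseteq> {1..n} \<and> card H = h \<and> R \<subseteq> {1..n} - H \<and> card R = d"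
    have "finite H" using HR finite_subset by blast
    then obtain idx where idx: "bij_betw idx H {0..<card H}" using ex_bij_betw_finite_nat by blast
    interpret c3rep n k s0 s lam h d \<delta> m h' H R idx
      by unfold_locales (use \<delta>pos hh dk assms(5,6) s0e se HR idx assms(3) in auto)
    show "\<exists>g :: nat \<Rightarrow> (nat \<Rightarrow> 'a) \<Rightarrow> nat \<Rightarrow> 'a. \<forall>c\<in>C. \<forall>c'\<in>C.
           (\<forall>j\<in>R. \<forall>mm < h * ell div (d - k + h). g j (c j) mm = g j (c' j) mm)
           \<longrightarrow> (\<forall>i\<in>H. c i = c' i)"
      by (rule repair) (use assms(3) in simp)
  qed
  show ?thesis unfolding Let_def using MDS REP unfolding s0_def s_def \<delta>_def by simp
qed


end
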